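(* In the standing setting, let $k_1,k_2>0$, $\beta_{\min}\in(\beta_{\mathrm{crit}},1]$, $\beta:[0,\infty)\to[\beta_{\min},1]$ continuous, apply the relieved control law, and let $t_s>0$. If $\mathbf z_0\in\mathcal B:=\{\mathbf x\in\mathbb R^6:\rho\|\mathbf x\|<r\}$, then $\mathbf z_0\in\mathcal E$, and the closed-loop solution satisfies, for all $t\in[0,t_s]$, $$\|\mathbf f_a(t,\mathbf z_1(t))\|\le\sum_{j=1}^P\mu_j\psi_j(\|\mathbf z_0\|,t)\le\phi(\|\mathbf z_0\|),$$ where $$\psi_j(s,t)=\frac{\|\mathbf w_j(t)\|_1}{(\|\mathbf w_j(t)\|-\rho se^{-\theta t})^3}-\frac{\|\mathbf w_j(t)\|_1}{\|\mathbf w_j(t)\|^3}+\frac{\sqrt3\,\rho se^{-\theta t}}{(\|\mathbf w_j(t)\|-\rho se^{-\theta t})^3},\qquad \phi(s)=\max_{t\in[0,t_s]}\sum_{j=1}^P\mu_j\psi_j(s,t).$$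
   Context: Standing setting: Let $P\ge1$. For $j=1,\dots,P$ let $\mu_j>0$ and let $\mathbf r_j:[0,\infty)\to\mathbb R^3$ be continuously differentiable, with $\mathbf r_1\equiv\mathbf 0$. Let $\mathbf r^*:[0,\infty)\to\mathbb R^3$ be continuously differentiable (the target trajectory) with $\mathbf r^*(t)\neq\mathbf r_j(t)$ for all $t\ge0$ and all $j$, and set $\mathbf w_j(t):=\mathbf r_j(t)-\mathbf r^*(t)$. For $t\ge0$ and $\mathbf z_1\in\mathbb R^3$ with $\mathbf z_1\ne\mathbf w_j(t)$ for all $j$, define $$\mathbf f_a(t,\mathbf z_1)=\sum_{j=1}^P\mu_j\left(\frac{\mathbf w_j(t)-\mathbf z_1}{\|\mathbf w_j(t)-\mathbf z_1\|^3}-\frac{\mathbf w_j(t)}{\|\mathbf w_j(t)\|^3}\right).$$ The controlled error dynamics are $\dot{\mathbf z}_1(t)=\mathbf z_2(t)$, $\dot{\mathbf z}_2(t)=\mathbf f_a(t,\mathbf z_1(t))+\mathbf u(t)$, with state $\mathbf z=(\mathbf z_1,\mathbf z_2)\in\mathbb R^6$, control $\mathbf u(t)\in\mathbb R^3$, initial time $0$ and $\mathbf z_0:=\mathbf z(0)$, defined on $\mathcal D(t)=\{(\mathbf x,\mathbf y)\in\mathbb R^6:\mathbf x\neq\mathbf w_j(t),\ j=1,\dots,P\}$. $\|\cdot\|$ is the Euclidean norm and $\|\cdot\|_1$ the $\ell_1$ norm; $\lambda_{\min},\lambda_{\max}$ denote smallest/largest eigenvalues. Relieved control law: $\mathbf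 u(t)=-\beta(t)\big[(1+k_1k_2)\mathbf z_1(t)+(k_1+k_2)\mathbf z_2(t)\big]-\mathbf f_a(t,\mathbf z_1(t))$. Critical relief: $\beta_{\mathrm{crit}}=\dfrac{k_1^4+2k_1k_2+1-2\sqrt{(k_1k_2+1)(k_1k_2+k_1^4)}}{(k_1^2-1)^2}$ if $k_1\ne1$, and $\beta_{\mathrm{crit}}=\dfrac{1}{1+k_2}$ if $k_1=1$. Matrices and constants: $\mathbf X=\begin{bmatrix}(1+k_1^2)\mathbf I_3&k_1\mathbf I_3\\k_1\mathbf I_3&\mathbf I_3\end{bmatrix}$, $\rho=\sqrt{\lambda_{\max}(\mathbf X)/\lambda_{\min}(\mathbf X)}$; $\mathbf U(\beta)=\begin{bmatrix}2(k_1+k_1^2k_2)\beta\,\mathbf I_3 & ((k_1^2+2k_1k_2+1)\beta-k_1^2-1)\mathbf I_3\\ ((k_1^2+2k_1k_2+1)\beta-k_1^2-1)\mathbf I_3 & 2((k_1+k_2)\beta-k_1)\mathbf I_3\end{bmatrix}$; $\theta=\dfrac{\lambda_{\min}(\mathbf U(\beta_{\min}))}{2\lambda_{\max}(\mathbf X)}$; $r=\min_{j=1,\dots,P,\ t\in[0,t_s]}\|\mathbf w_j(t)\|$; $\mathcal E=\{\mathbf y\in\mathbb R^6:\mathbf y^T\mathbf X\mathbf y<\lambda_{\min}(\mathbf X)r^2\}$. *)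

theory Defs
  imports "HOL-Analysis.Analysis"
begin

text \<open>State space R^6 is rendered as real^(3+3): first block z1, second block z2.\<close>

definition stack :: "real^3 \<Rightarrow> real^3 \<Rightarrow> real^(3+3)" where
  "stack x y = (\<chi> i. case i of Inl a \<Rightarrow> x $ a | Inr b \<Rightarrow> y $ b)"

definition blk :: "real \<Rightarrow> real \<Rightarrow> real \<Rightarrow> real \<Rightarrow> real^(3+3)^(3+3)" where
  "blk a b c d = (\<chi> i j. case (i, j) of
      (Inl p, Inl q) \<Rightarrow> (if p = q then a else 0)
    | (Inl p, Inr q) \<Rightarrow> (if p = q then b else 0)
    | (Inr p, Inl q) \<Rightarrow> (if p = q then c else 0)
    | (Inr p, Inr q) \<Rightarrow> (if p = q then d else 0))"

definition eigvals :: "real^'n^'n \<Rightarrow> real set" where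
  "eigvals M = {l. \<exists>v. v \<noteq> 0 \<and> M *v v = l *\<^sub>R v}"

definition lmin :: "real^'n^'n \<Rightarrow> real" where
  "lmin M = Min (eigvals M)"

definition lmax :: "real^'n^'n \<Rightarrow> real" where
  "lmax M = Max (eigvals M)"

definition norm1 :: "real^'n \<Rightarrow> real" where
  "norm1 x = (\<Sum>i\<in>UNIV. \<bar>x $ i\<bar>)"

definition fa :: "nat \<Rightarrow> (nat \<Rightarrow> real) \<Rightarrow> (nat \<Rightarrow> real \<Rightarrow> real^3) \<Rightarrow> real \<Rightarrow> real^3 \<Rightarrow> real^3" where
  "fa P \<mu> w t z = (\<Sum>j=1..P. \<mu> j *\<^sub>R
       ((1 / norm (w j t - z) ^ 3) *\<^sub>R (w j t - z) - (1 / norm (w j t) ^ 3) *\<^sub>R w j t))"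

definition beta_crit :: "real \<Rightarrow> real \<Rightarrow> real" where
  "beta_crit k1 k2 = (if k1 \<noteq> 1 then
     (k1^4 + 2*k1*k2 + 1 - 2 * sqrt ((k1*k2 + 1) * (k1*k2 + k1^4))) / (k1^2 - 1)^2
   else 1 / (1 + k2))"

definition Xmat :: "real \<Rightarrow> real^(3+3)^(3+3)" where
  "Xmat k1 = blk (1 + k1^2) k1 k1 1"

definition Umat :: "real \<Rightarrow> real \<Rightarrow> real \<Rightarrow> real^(3+3)^(3+3)" where
  "Umat k1 k2 b = blk (2 * (k1 + k1^2 * k2) * b)
                      ((k1^2 + 2*k1*k2 + 1) * b - k1^2 - 1)
                      ((k1^2 + 2*k1*k2 + 1) * b - k1^2 - 1)
                      (2 * ((k1 + k2) * b - k1))"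

definition psi :: "(nat \<Rightarrow> real \<Rightarrow> real^3) \<Rightarrow> real \<Rightarrow> real \<Rightarrow> nat \<Rightarrow> real \<Rightarrow> real \<Rightarrow> real" where
  "psi w \<rho> \<theta> j s t =
     norm1 (w j t) / (norm (w j t) - \<rho> * s * exp (- \<theta> * t)) ^ 3
     - norm1 (w j t) / norm (w j t) ^ 3
     + sqrt 3 * \<rho> * s * exp (- \<theta> * t) / (norm (w j t) - \<rho> * s * exp (- \<theta> * t)) ^ 3"

text \<open>phi(s) = max over t in [0,ts] of the sum (rendered as the supremum, which is attained).\<close>
definition phi :: "nat \<Rightarrow> (nat \<Rightarrow> real) \<Rightarrow> (nat \<Rightarrow> real \<Rightarrow> real^3) \<Rightarrow> real \<Rightarrow> real \<Rightarrow> real \<Rightarrow> real \<Rightarrow> real" where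
  "phi P \<mu> w \<rho> \<theta> ts s = (SUP t\<in>{0..ts}. (\<Sum>j=1..P. \<mu> j * psi w \<rho> \<theta> j s t))"

end

theory Submission
  imports Defs
begin

lemma sum_sum_type:
  fixes f :: "'a::finite + 'b::finite \<Rightarrow> 'c::comm_monoid_add"
  shows "sum f UNIV = (\<Sum>p\<in>UNIV. f (Inl p)) + (\<Sum>q\<in>UNIV. f (Inr q))"
proof -
  have "sum f UNIV = sum f (range Inl) + sum f (range Inr)"
    by (subst UNIV_sum, rule sum.union_disjoint) auto
  then show ?thesis by (simp add: sum.reindex)
qed

lemma stack_Inl[simp]: "stack x y $ Inl p = x $ p" by (simp add: stack_def)
lemma stack_Inr[simp]: "stack x y $ Inr p = y $ p" by (simp add: stack_def)

lemma inner_stack: "stack x y \<bullet> stack x' y' = x \<bullet> x' + y \<bullet> y'"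
  by (simp add: inner_vec_def sum_sum_type)

lemma norm_stack_sq: "norm (stack x y)^2 = norm x^2 + norm y^2"
  by (simp add: power2_norm_eq_inner inner_stack)

lemma sum_delta_mult:
  fixes f :: "'n::finite \<Rightarrow> real"
  shows "(\<Sum>p\<in>UNIV. (if q = p then a else 0) * f p) = a * f q"
proof -
  have "(\<Sum>p\<in>UNIV. (if q = p then a else 0) * f p) = (\<Sum>p\<in>UNIV. if q = p then a * f p else 0)"
    by (rule sum.cong) auto
  then show ?thesis by simp
qed

lemma blk_mult_stack:
  "blk a b c d *v stack x y = stack (a *\<^sub>R x + b *\<^sub>R y) (c *\<^sub>R x + d *\<^sub>R y)"
proof -
  have "(blk a b c d *v stack x y) $ i = stack (a *\<^sub>R x + b *\<^sub>R y) (c *\<^sub>R x + d *\<^sub>R y) $ i" for i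
    by (cases i) (simp_all add: matrix_vector_mult_def blk_def sum_sum_type sum_delta_mult)
  then show ?thesis using vec_eq_iff by blast
qed

lemma stack_eq_iff: "stack x y = stack x' y' \<longleftrightarrow> x = x' \<and> y = y'"
  apply (auto simp: vec_eq_iff)
  apply (metis stack_Inl)
  apply (metis stack_Inr)
  by (case_tac i; simp)

lemma stack_surj: "v = stack (\<chi> p. v $ Inl p) (\<chi> q. v $ Inr q)"
proof -
  have "v $ i = stack (\<chi> p. v $ Inl p) (\<chi> q. v $ Inr q) $ i" for i by (cases i) auto
  then show ?thesis using vec_eq_iff by blast
qed

lemma stack_scale: "l *\<^sub>R stack x y = stack (l *\<^sub>R x) (l *\<^sub>R y)"
proof -
  have "(l *\<^sub>R stack x y) $ i = stack (l *\<^sub>R x) (l *\<^sub>R y) $ i" for i by (cases i) auto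
  then show ?thesis using vec_eq_iff by blast
qed

lemma stack_zero: "stack 0 0 = 0"
proof -
  have "stack 0 0 $ i = (0::real^(3+3)) $ i" for i by (cases i) auto
  then show ?thesis using vec_eq_iff by blast
qed


definition lm :: "real \<Rightarrow> real \<Rightarrow> real \<Rightarrow> real" where
  "lm a b d = (a + d) / 2 - sqrt (((a - d) / 2)^2 + b^2)"
definition lp :: "real \<Rightarrow> real \<Rightarrow> real \<Rightarrow> real" where
  "lp a b d = (a + d) / 2 + sqrt (((a - d) / 2)^2 + b^2)"

lemma lm_le_lp: "lm a b d \<le> lp a b d"
  by (simp add: lm_def lp_def)

lemma char_root:
  assumes "(a - l) * (d - l) = b^2"
  shows "l = lm a b d \<or> l = lp a b d"
proof -
  define S where "S = sqrt (((a - d) / 2)^2 + b^2)"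
  have S2: "S^2 = ((a - d) / 2)^2 + b^2" unfolding S_def by simp
  define m e where "m = (a + d) / 2" and "e = (a - d) / 2"
  have ad: "a = m + e" "d = m - e" unfolding m_def e_def by (auto simp: field_simps)
  have "(l - m)^2 = S^2" using assms S2 ad unfolding e_def[symmetric] by algebra
  then have "(l - (a + d) / 2)^2 = S^2" unfolding m_def .
  then have "l - (a + d) / 2 = S \<or> l - (a + d) / 2 = - S"
    using power2_eq_iff by blast
  then show ?thesis unfolding lm_def lp_def S_def[symmetric] by auto
qed

lemma root_char_lm: "(a - lm a b d) * (d - lm a b d) = b^2"
proof -
  define S where "S = sqrt (((a - d) / 2)^2 + b^2)"
  have S2: "S^2 = ((a - d) / 2)^2 + b^2" unfolding S_def by simp
  define m e where "m = (a + d) / 2" and "e = (a - d) / 2"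
  have ad: "a = m + e" "d = m - e" unfolding m_def e_def by (auto simp: field_simps)
  show ?thesis unfolding lm_def S_def[symmetric] m_def[symmetric] using S2 ad unfolding e_def[symmetric] by algebra
qed

lemma root_char_lp: "(a - lp a b d) * (d - lp a b d) = b^2"
proof -
  define S where "S = sqrt (((a - d) / 2)^2 + b^2)"
  have S2: "S^2 = ((a - d) / 2)^2 + b^2" unfolding S_def by simp
  define m e where "m = (a + d) / 2" and "e = (a - d) / 2"
  have ad: "a = m + e" "d = m - e" unfolding m_def e_def by (auto simp: field_simps)
  show ?thesis unfolding lp_def S_def[symmetric] m_def[symmetric] using S2 ad unfolding e_def[symmetric] by algebra
qed

lemma sqrt_ge_halfdiff: "(a - d) / 2 \<le> sqrt (((a - d) / 2)^2 + b^2) \<and> (d - a) / 2 \<le> sqrt (((a - d) / 2)^2 + b^2)"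
proof -
  have "sqrt (((a - d) / 2)^2) \<le> sqrt (((a - d) / 2)^2 + b^2)"
    by (rule real_sqrt_le_mono) simp
  then have "\<bar>(a - d) / 2\<bar> \<le> sqrt (((a - d) / 2)^2 + b^2)"
    by (simp only: real_sqrt_abs)
  then show ?thesis by (auto simp: abs_le_iff)
qed

lemma lm_le_a: "lm a b d \<le> a \<and> lm a b d \<le> d"
proof -
  obtain S where S: "S = sqrt (((a - d) / 2)^2 + b^2)" by blast
  have "(a - d) / 2 \<le> S" "(d - a) / 2 \<le> S" using sqrt_ge_halfdiff[of a d b] S by auto
  then show ?thesis unfolding lm_def S[symmetric] by (auto simp: field_simps)
qed

lemma lp_ge_a: "a \<le> lp a b d \<and> d \<le> lp a b d"
proof -
  obtain S where S: "S = sqrt (((a - d) / 2)^2 + b^2)" by blast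
  have "(a - d) / 2 \<le> S" "(d - a) / 2 \<le> S" using sqrt_ge_halfdiff[of a d b] S by auto
  then show ?thesis unfolding lp_def S[symmetric] by (auto simp: field_simps)
qed

lemma lm_pos:
  assumes "0 < a" "b^2 < a * d"
  shows "0 < lm a b d"
proof -
  have b2: "0 \<le> b^2" by simp
  have d: "0 < d"
  proof (rule ccontr)
    assume "\<not> 0 < d"
    then have "a * d \<le> 0" using assms(1) by (simp add: mult_nonneg_nonpos)
    then show False using assms(2) b2 by linarith
  qed
  have id: "((a + d) / 2)^2 - ((a - d) / 2)^2 = a * d" by (simp add: power2_eq_square field_simps)
  have "sqrt (((a - d) / 2)^2 + b^2) < sqrt (((a + d) / 2)^2)"
    using assms id by (intro real_sqrt_less_mono) linarith
  also have "\<dots> = (a + d) / 2" using assms d by simp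
  finally show ?thesis unfolding lm_def by simp
qed

lemma quad_nonneg:
  fixes p q b A B C :: real
  assumes "0 \<le> p" "0 \<le> q" "p * q = b^2" "B^2 \<le> A * C" "0 \<le> A" "0 \<le> C"
  shows "0 \<le> p * A + 2 * b * B + q * C"
proof -
  have "(2 * b * B)^2 = 4 * b^2 * B^2" by (simp add: power2_eq_square)
  also have "\<dots> \<le> 4 * (p * q) * (A * C)" using assms by (simp add: mult_left_mono)
  also have "\<dots> \<le> (p * A + q * C)^2"
  proof -
    have "(p * A + q * C)^2 - 4 * (p * q) * (A * C) = (p * A - q * C)^2"
      by (simp add: power2_eq_square algebra_simps)
    moreover have "0 \<le> (p * A - q * C)^2" by simp
    ultimately show ?thesis by linarith
  qed
  finally have "(2 * b * B)^2 \<le> (p * A + q * C)^2" .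
  moreover have "0 \<le> p * A + q * C" using assms by simp
  ultimately have "- (2 * b * B) \<le> p * A + q * C"
    using power2_le_imp_le[of "- (2 * b * B)" "p * A + q * C"] by simp
  then show ?thesis by linarith
qed

lemma quad_lower:
  assumes "B^2 \<le> A * C" "0 \<le> A" "0 \<le> C"
  shows "lm a b d * (A + C) \<le> a * A + 2 * b * B + d * C"
proof -
  have "0 \<le> (a - lm a b d) * A + 2 * b * B + (d - lm a b d) * C"
    using quad_nonneg[OF _ _ root_char_lm assms] lm_le_a by simp
  then show ?thesis by (simp add: algebra_simps)
qed

lemma quad_upper:
  assumes "B^2 \<le> A * C" "0 \<le> A" "0 \<le> C"
  shows "a * A + 2 * b * B + d * C \<le> lp a b d * (A + C)"
proof -
  have "(lp a b d - a) * (lp a b d - d) = (-b)^2" using root_char_lp[of a b d] by (simp add: algebra_simps)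
  then have "0 \<le> (lp a b d - a) * A + 2 * (-b) * B + (lp a b d - d) * C"
    using quad_nonneg[of "lp a b d - a" "lp a b d - d" "-b" B A C] assms lp_ge_a[of a b d] by linarith
  then show ?thesis by (simp add: algebra_simps)
qed


lemma eigvec2:
  fixes a b d l :: real
  assumes "(a - l) * (d - l) = b^2"
  shows "\<exists>x0 y0. (x0 \<noteq> 0 \<or> y0 \<noteq> 0) \<and> a * x0 + b * y0 = l * x0 \<and> b * x0 + d * y0 = l * y0"
proof (cases "b = 0")
  case False
  have "a * b + b * (l - a) = l * b" by algebra
  moreover have "b * b + d * (l - a) = l * (l - a)" using assms by algebra
  ultimately show ?thesis using False by blast
next
  case True
  then have "a = l \<or> d = l" using assms by simp
  then show ?thesis
  proof
    assume "a = l" then show ?thesis using True by (intro exI[of _ 1] exI[of _ 0]) auto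
  next
    assume "d = l" then show ?thesis using True by (intro exI[of _ 0] exI[of _ 1]) auto
  qed
qed

lemma eigvals_blk: "eigvals (blk a b b d) = {lm a b d, lp a b d}"
proof
  show "eigvals (blk a b b d) \<subseteq> {lm a b d, lp a b d}"
  proof
    fix l assume "l \<in> eigvals (blk a b b d)"
    then obtain v where v: "v \<noteq> 0" "blk a b b d *v v = l *\<^sub>R v" by (auto simp: eigvals_def)
    define x where "x = (\<chi> p. v $ Inl p)"
    define y where "y = (\<chi> q. v $ Inr q)"
    have vs: "v = stack x y" unfolding x_def y_def by (rule stack_surj)
    from v(2) have "stack (a *\<^sub>R x + b *\<^sub>R y) (b *\<^sub>R x + d *\<^sub>R y) = stack (l *\<^sub>R x) (l *\<^sub>R y)"
      by (simp add: vs blk_mult_stack stack_scale)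
    then have e1: "a *\<^sub>R x + b *\<^sub>R y = l *\<^sub>R x" and e2: "b *\<^sub>R x + d *\<^sub>R y = l *\<^sub>R y"
      by (simp_all add: stack_eq_iff)
    have "x \<noteq> 0 \<or> y \<noteq> 0" using v(1) vs stack_zero by auto
    then obtain i where i: "x $ i \<noteq> 0 \<or> y $ i \<noteq> 0" by (auto simp: vec_eq_iff)
    have c1: "a * x $ i + b * y $ i = l * x $ i" using arg_cong[OF e1, of "\<lambda>v. v $ i"] by simp
    have c2: "b * x $ i + d * y $ i = l * y $ i" using arg_cong[OF e2, of "\<lambda>v. v $ i"] by simp
    have h1: "((a - l) * (d - l) - b^2) * x $ i = 0" using c1 c2 by algebra
    have h2: "((a - l) * (d - l) - b^2) * y $ i = 0" using c1 c2 by algebra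
    have "(a - l) * (d - l) = b^2" using h1 h2 i by auto
    then show "l \<in> {lm a b d, lp a b d}" using char_root by auto
  qed
next
  show "{lm a b d, lp a b d} \<subseteq> eigvals (blk a b b d)"
  proof
    fix l assume "l \<in> {lm a b d, lp a b d}"
    then have "(a - l) * (d - l) = b^2" using root_char_lm root_char_lp by auto
    then obtain x0 y0 where xy: "x0 \<noteq> 0 \<or> y0 \<noteq> 0" "a * x0 + b * y0 = l * x0" "b * x0 + d * y0 = l * y0"
      using eigvec2 by blast
    define v where "v = stack (x0 *\<^sub>R (1::real^3)) (y0 *\<^sub>R 1)"
    have "v $ Inl 1 = x0" "v $ Inr 1 = y0" unfolding v_def by simp_all
    then have "v \<noteq> 0" using xy(1) by auto
    moreover have "blk a b b d *v v = l *\<^sub>R v"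
    proof -
      have "a *\<^sub>R x0 *\<^sub>R (1::real^3) + b *\<^sub>R y0 *\<^sub>R 1 = (l * x0) *\<^sub>R 1"
        using xy(2) by (simp add: scaleR_add_left[symmetric])
      moreover have "b *\<^sub>R x0 *\<^sub>R (1::real^3) + d *\<^sub>R y0 *\<^sub>R 1 = (l * y0) *\<^sub>R 1"
        using xy(3) by (simp add: scaleR_add_left[symmetric])
      ultimately show ?thesis unfolding v_def blk_mult_stack stack_scale by simp
    qed
    ultimately show "l \<in> eigvals (blk a b b d)" unfolding eigvals_def by blast
  qed
qed

lemma lmin_blk: "lmin (blk a b b d) = lm a b d"
  unfolding lmin_def eigvals_blk using lm_le_lp[of a b d] by (simp add: min_def)

lemma lmax_blk: "lmax (blk a b b d) = lp a b d"
  unfolding lmax_def eigvals_blk using lm_le_lp[of a b d] by (simp add: max_def)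

lemma quad_blk: "stack x y \<bullet> (blk a b b d *v stack x y) = a * (x \<bullet> x) + 2 * b * (x \<bullet> y) + d * (y \<bullet> y)"
  by (simp add: blk_mult_stack inner_stack inner_add_right inner_commute algebra_simps)

lemma det_pos:
  fixes k1 k2 \<beta> :: real
  assumes k1: "0 < k1" and k2: "0 < k2" and bc: "beta_crit k1 k2 < \<beta>" and b1: "\<beta> \<le> 1"
  shows "0 < \<beta>"
    and "((k1^2 + 2*k1*k2 + 1) * \<beta> - k1^2 - 1)^2 < (2 * (k1 + k1^2 * k2) * \<beta>) * (2 * ((k1 + k2) * \<beta> - k1))"
proof -
  define D where "D x = (2 * (k1 + k1^2 * k2) * x) * (2 * ((k1 + k2) * x - k1)) - ((k1^2 + 2*k1*k2 + 1) * x - k1^2 - 1)^2" for x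
  define E where "E = (k1^2 - 1)^2"
  define N where "N = k1^4 + 2*k1*k2 + 1"
  have Dform: "D x = - E * x^2 + 2 * N * x - (1 + k1^2)^2" for x
    unfolding D_def E_def N_def by (simp add: power2_eq_square power4_eq_xxxx algebra_simps)
  have D1: "D 1 = 4 * k1 * k2" unfolding D_def by (simp add: power2_eq_square algebra_simps)
  have "0 < \<beta> \<and> 0 < D \<beta>"
  proof (cases "k1 = 1")
    case True
    then have bc': "1 / (1 + k2) < \<beta>" using bc by (simp add: beta_crit_def)
    then have "1 < (1 + k2) * \<beta>" using k2 by (simp add: field_simps)
    moreover have "D \<beta> = 4 * ((1 + k2) * \<beta>) - 4" unfolding D_def True by (simp add: power2_eq_square algebra_simps)
    moreover have "0 < 1 / (1 + k2)" using k2 by simp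
    ultimately show ?thesis using bc' by linarith
  next
    case False
    define S where "S = sqrt ((k1*k2 + 1) * (k1*k2 + k1^4))"
    have S2: "S^2 = (k1*k2 + 1) * (k1*k2 + k1^4)" unfolding S_def using k1 k2 by simp
    have "k1^2 \<noteq> 1" using False k1 by (simp add: power2_eq_1_iff)
    then have Epos: "0 < E" unfolding E_def by simp
    define bc where "bc = (N - 2 * S) / E"
    have bcdef: "beta_crit k1 k2 = bc" unfolding beta_crit_def bc_def N_def E_def S_def using False by simp
    have idN: "4 * S^2 = N^2 - (1 + k1^2)^2 * E" unfolding S2 N_def E_def
      by (simp add: power2_eq_square power4_eq_xxxx algebra_simps)
    have Npos: "0 < N" unfolding N_def using k1 k2 by (simp add: add_pos_nonneg)
    have "(2 * S)^2 = N^2 - (1 + k1^2)^2 * E" using idN by (simp add: power_mult_distrib)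
    moreover have "0 \<le> (1 + k1^2)^2 * E" using Epos by simp
    ultimately have "(2 * S)^2 \<le> N^2" by linarith
    then have "2 * S \<le> N" using Npos power2_le_imp_le[of "2 * S" N] by simp
    then have bc0: "0 \<le> bc" unfolding bc_def using Epos by simp
    have Ebc: "E * bc = N - 2 * S" unfolding bc_def using Epos by simp
    have "E * D bc = - ((E * bc)^2) + 2 * N * (E * bc) - (1 + k1^2)^2 * E"
      unfolding Dform by (simp add: power2_eq_square algebra_simps)
    also have "\<dots> = N^2 - 4 * S^2 - (1 + k1^2)^2 * E" unfolding Ebc by (simp add: power2_eq_square algebra_simps)
    also have "\<dots> = 0" using idN by simp
    finally have Dbc: "D bc = 0" using Epos by simp
    have interp: "(1 - bc) * D \<beta> = (\<beta> - bc) * D 1 + (1 - \<beta>) * D bc + E * (\<beta> - bc) * (1 - \<beta>) * (1 - bc)"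
      unfolding Dform by (simp add: power2_eq_square algebra_simps)
    have lt: "bc < \<beta>" using bc bcdef by simp
    have "0 < (\<beta> - bc) * D 1" using lt D1 k1 k2 by simp
    moreover have "0 \<le> E * (\<beta> - bc) * (1 - \<beta>) * (1 - bc)" using Epos lt b1 by simp
    ultimately have "0 < (1 - bc) * D \<beta>" using interp Dbc by simp
    moreover have "0 < 1 - bc" using lt b1 by simp
    ultimately have "0 < D \<beta>" by (simp add: zero_less_mult_iff)
    then show ?thesis using bc0 lt by simp
  qed
  then show "0 < \<beta>" and "((k1^2 + 2*k1*k2 + 1) * \<beta> - k1^2 - 1)^2 < (2 * (k1 + k1^2 * k2) * \<beta>) * (2 * ((k1 + k2) * \<beta> - k1))"
    unfolding D_def by auto
qed

lemma key_ineq: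
  fixes k1 k2 \<beta>min \<beta> A B C Y c :: real
  assumes "\<beta>min \<le> \<beta>" "\<beta> \<le> 1" "0 \<le> A" "0 \<le> Y" "c \<le> 2 * k1" "c \<le> 2 * k2"
    and Y: "Y = k1^2 * A + 2 * k1 * B + C"
    and low: "c * ((1 + k1^2) * A + 2 * k1 * B + C) \<le>
       2 * (k1 + k1^2 * k2) * \<beta>min * A + 2 * ((k1^2 + 2*k1*k2 + 1) * \<beta>min - k1^2 - 1) * B
       + 2 * ((k1 + k2) * \<beta>min - k1) * C"
  shows "c * ((1 + k1^2) * A + 2 * k1 * B + C) \<le>
       2 * (k1 + k1^2 * k2) * \<beta> * A + 2 * ((k1^2 + 2*k1*k2 + 1) * \<beta> - k1^2 - 1) * B
       + 2 * ((k1 + k2) * \<beta> - k1) * C"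
proof -
  define g where "g x = 2 * (k1 + k1^2 * k2) * x * A + 2 * ((k1^2 + 2*k1*k2 + 1) * x - k1^2 - 1) * B
       + 2 * ((k1 + k2) * x - k1) * C - c * ((1 + k1^2) * A + 2 * k1 * B + C)" for x
  have g0: "0 \<le> g \<beta>min" using low unfolding g_def by simp
  have "g 1 = (2 * k1 - c) * A + (2 * k2 - c) * Y" unfolding g_def Y by algebra
  then have g1: "0 \<le> g 1" using assms by simp
  have interp: "(1 - \<beta>min) * g \<beta> = (1 - \<beta>) * g \<beta>min + (\<beta> - \<beta>min) * g 1"
    unfolding g_def by algebra
  have "0 \<le> g \<beta>"
  proof (cases "\<beta>min = 1")
    case True then have "\<beta> = \<beta>min" using assms by simp
    then show ?thesis using g0 by simp
  next
    case False
    then have p: "0 < 1 - \<beta>min" using assms by simp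
    have "0 \<le> (1 - \<beta>) * g \<beta>min + (\<beta> - \<beta>min) * g 1" using g0 g1 assms by simp
    then have "0 \<le> (1 - \<beta>min) * g \<beta>" using interp by simp
    then show ?thesis using p by (simp add: zero_le_mult_iff)
  qed
  then show ?thesis unfolding g_def by simp
qed

lemma inv_cube_convex:
  fixes W \<delta> :: real
  assumes "0 \<le> \<delta>" "\<delta> < W"
  shows "1 / W^3 - 1 / (W + \<delta>)^3 \<le> 1 / (W - \<delta>)^3 - 1 / W^3"
proof -
  have p1: "0 < W - \<delta>" and p2: "0 < W + \<delta>" and p3: "0 < W" using assms by auto
  have dd: "\<delta> * \<delta> \<le> W * W" using assms by (intro mult_mono) auto
  have a: "((W - \<delta>) * (W + \<delta>))^3 \<le> (W^2)^3"
    using assms dd by (intro power_mono) (auto simp: power2_eq_square algebra_simps)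
  have b: "(W - \<delta>)^3 + (W + \<delta>)^3 = 2 * W^3 + 6 * W * \<delta>^2" by algebra
  have c: "0 \<le> W^3 * (6 * W * \<delta>^2)" using p3 by simp
  have "2 * ((W - \<delta>) * (W + \<delta>))^3 \<le> W^3 * ((W - \<delta>)^3 + (W + \<delta>)^3)"
    using a b c by (simp add: algebra_simps power_mult_distrib power_mult[symmetric])
  then have key: "2 * ((W - \<delta>)^3 * (W + \<delta>)^3) \<le> W^3 * ((W - \<delta>)^3 + (W + \<delta>)^3)"
    by (simp add: power_mult_distrib)
  have q: "0 < (W - \<delta>)^3 * (W + \<delta>)^3" "0 < W^3" using p1 p2 p3 by simp_all
  have "2 / W^3 \<le> ((W - \<delta>)^3 + (W + \<delta>)^3) / ((W - \<delta>)^3 * (W + \<delta>)^3)"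
    using key q by (simp add: divide_le_eq le_divide_eq mult.commute)
  also have "\<dots> = 1 / (W - \<delta>)^3 + 1 / (W + \<delta>)^3" using p1 p2 by (simp add: field_simps)
  finally show ?thesis by simp

qed

lemma vd_inner:
  fixes f g :: "real \<Rightarrow> 'a::real_inner"
  assumes "(f has_vector_derivative f') (at x within S)" "(g has_vector_derivative g') (at x within S)"
  shows "((\<lambda>t. f t \<bullet> g t) has_real_derivative (f x \<bullet> g' + f' \<bullet> g x)) (at x within S)"
proof -
  have "((\<lambda>t. f t \<bullet> g t) has_derivative (\<lambda>h. f x \<bullet> (h *\<^sub>R g') + (h *\<^sub>R f') \<bullet> g x)) (at x within S)"
    using has_derivative_inner[OF assms[unfolded has_vector_derivative_def]] .
  then show ?thesis unfolding has_field_derivative_def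
    by (rule has_derivative_eq_rhs) (auto simp: algebra_simps fun_eq_iff)
qed

lemma fa_term_bound:
  fixes w z :: "real^3" and \<delta> :: real
  assumes z: "norm z \<le> \<delta>" and dw: "\<delta> < norm w"
  shows "norm ((1 / norm (w - z) ^ 3) *\<^sub>R (w - z) - (1 / norm w ^ 3) *\<^sub>R w)
    \<le> norm1 w / (norm w - \<delta>)^3 - norm1 w / norm w^3 + sqrt 3 * \<delta> / (norm w - \<delta>)^3"
proof -
  define W where "W = norm w"
  define d where "d = norm (w - z)"
  have d0: "0 \<le> \<delta>" using z norm_ge_zero order_trans by blast
  have Wd: "0 < W - \<delta>" "0 < W" using dw d0 unfolding W_def by auto
  have "W \<le> d + norm z" unfolding W_def d_def using norm_triangle_ineq[of "w - z" z] by simp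
  then have dlo: "W - \<delta> \<le> d" using z by simp
  have dhi: "d \<le> W + \<delta>" unfolding W_def d_def using norm_triangle_ineq4[of w z] z by simp
  have dpos: "0 < d" using dlo Wd by simp
  define K where "K = 1 / (W - \<delta>)^3 - 1 / W^3"
  have c1: "1 / d^3 \<le> 1 / (W - \<delta>)^3"
    using Wd dlo dpos by (intro divide_left_mono power_mono) auto
  have c2: "1 / (W + \<delta>)^3 \<le> 1 / d^3"
    using Wd dhi dpos by (intro divide_left_mono power_mono) auto
  have c3: "1 / W^3 - 1 / (W + \<delta>)^3 \<le> K" unfolding K_def using inv_cube_convex[of \<delta> W] d0 Wd by simp
  have Kpos: "0 \<le> K" unfolding K_def using Wd d0
    by (simp add: divide_left_mono power_mono)
  have h1: "\<bar>1 / d^3 - 1 / W^3\<bar> \<le> K" using c1 c2 c3 unfolding K_def abs_le_iff by linarith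
  have h2: "W \<le> norm1 w" unfolding W_def norm1_def by (rule norm_le_l1_cart)
  have eq: "(1 / d^3) *\<^sub>R (w - z) - (1 / W^3) *\<^sub>R w = (1 / d^3 - 1 / W^3) *\<^sub>R w - (1 / d^3) *\<^sub>R z"
    by (simp add: algebra_simps)
  have "norm ((1 / d^3) *\<^sub>R (w - z) - (1 / W^3) *\<^sub>R w) \<le> norm ((1 / d^3 - 1 / W^3) *\<^sub>R w) + norm ((1 / d^3) *\<^sub>R z)"
    unfolding eq by (rule norm_triangle_ineq4)
  also have "\<dots> = \<bar>1 / d^3 - 1 / W^3\<bar> * W + (1 / d^3) * norm z" unfolding W_def using dpos by simp
  also have "\<dots> \<le> K * norm1 w + (1 / (W - \<delta>)^3) * \<delta>"
  proof (rule add_mono)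
    show "\<bar>1 / d^3 - 1 / W^3\<bar> * W \<le> K * norm1 w" using h1 h2 Kpos Wd by (intro mult_mono) auto
    show "(1 / d^3) * norm z \<le> (1 / (W - \<delta>)^3) * \<delta>" using c1 z dpos Wd by (intro mult_mono) auto
  qed
  also have "\<dots> \<le> K * norm1 w + sqrt 3 * \<delta> / (W - \<delta>)^3"
  proof -
    have "1 \<le> sqrt 3" by simp
    then have "\<delta> \<le> sqrt 3 * \<delta>" using d0 by (simp add: mult_le_cancel_right1)
    then have "\<delta> / (W - \<delta>)^3 \<le> sqrt 3 * \<delta> / (W - \<delta>)^3" using Wd by (simp add: divide_right_mono)
    then show ?thesis by simp
  qed
  also have "\<dots> = norm1 w / (W - \<delta>)^3 - norm1 w / W^3 + sqrt 3 * \<delta> / (W - \<delta>)^3"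
    unfolding K_def by (simp add: left_diff_distrib)
  finally show ?thesis unfolding W_def d_def .
qed

theorem mainTheorem7:
  fixes P :: nat and \<mu> :: "nat \<Rightarrow> real" and rr :: "nat \<Rightarrow> real \<Rightarrow> real^3"
    and rstar :: "real \<Rightarrow> real^3"
    and k1 k2 \<beta>min ts :: real and \<beta> :: "real \<Rightarrow> real"
    and z1 z2 :: "real \<Rightarrow> real^3"
    and w :: "nat \<Rightarrow> real \<Rightarrow> real^3" and u :: "real \<Rightarrow> real^3"
    and \<rho> \<theta> r :: real
  assumes P: "P \<ge> 1"
    and mu: "\<forall>j\<in>{1..P}. \<mu> j > 0"
    and rr_C1: "\<forall>j\<in>{1..P}. \<exists>r'. continuous_on {0..} r' \<and>
                  (\<forall>t\<ge>0. (rr j has_vector_derivative r' t) (at t within {0..}))"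
    and rr1: "\<forall>t\<ge>0. rr 1 t = 0"
    and rstar_C1: "\<exists>r'. continuous_on {0..} r' \<and>
                  (\<forall>t\<ge>0. (rstar has_vector_derivative r' t) (at t within {0..}))"
    and rstar_ne: "\<forall>t\<ge>0. \<forall>j\<in>{1..P}. rstar t \<noteq> rr j t"
    and w_def: "w \<equiv> (\<lambda>j t. rr j t - rstar t)"
    and k1: "k1 > 0" and k2: "k2 > 0"
    and bmin: "beta_crit k1 k2 < \<beta>min" "\<beta>min \<le> 1"
    and beta_cont: "continuous_on {0..} \<beta>"
    and beta_rng: "\<forall>t\<ge>0. \<beta>min \<le> \<beta> t \<and> \<beta> t \<le> 1"
    and u_def: "u \<equiv> (\<lambda>t. - \<beta> t *\<^sub>R ((1 + k1*k2) *\<^sub>R z1 t + (k1 + k2) *\<^sub>R z2 t)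
                          - fa P \<mu> w t (z1 t))"
    and ts: "ts > 0"
    and ode1: "\<forall>t\<in>{0..ts}. (z1 has_vector_derivative z2 t) (at t within {0..ts})"
    and ode2: "\<forall>t\<in>{0..ts}. (z2 has_vector_derivative (fa P \<mu> w t (z1 t) + u t))
                              (at t within {0..ts})"
    and rho_def: "\<rho> \<equiv> sqrt (lmax (Xmat k1) / lmin (Xmat k1))"
    and theta_def: "\<theta> \<equiv> lmin (Umat k1 k2 \<beta>min) / (2 * lmax (Xmat k1))"
    and r_def: "r \<equiv> Inf ((\<lambda>(j, t). norm (w j t)) ` ({1..P} \<times> {0..ts}))"
    and z0B: "\<rho> * norm (stack (z1 0) (z2 0)) < r"
  shows "stack (z1 0) (z2 0) \<bullet> (Xmat k1 *v stack (z1 0) (z2 0)) < lmin (Xmat k1) * r^2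
    \<and> (\<forall>t\<in>{0..ts}. (\<forall>j\<in>{1..P}. z1 t \<noteq> w j t)
        \<and> norm (fa P \<mu> w t (z1 t))
            \<le> (\<Sum>j=1..P. \<mu> j * psi w \<rho> \<theta> j (norm (stack (z1 0) (z2 0))) t)
        \<and> (\<Sum>j=1..P. \<mu> j * psi w \<rho> \<theta> j (norm (stack (z1 0) (z2 0))) t)
            \<le> phi P \<mu> w \<rho> \<theta> ts (norm (stack (z1 0) (z2 0))))"
proof -
  define s where "s = norm (stack (z1 0) (z2 0))"
  define LX where "LX = lm (1 + k1^2) k1 1"
  define LXM where "LXM = lp (1 + k1^2) k1 1"
  define U11 where "U11 = 2 * (k1 + k1^2 * k2) * \<beta>min"
  define U12 where "U12 = (k1^2 + 2*k1*k2 + 1) * \<beta>min - k1^2 - 1"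
  define U22 where "U22 = 2 * ((k1 + k2) * \<beta>min - k1)"
  define m where "m = lm U11 U12 U22"
  have lminX: "lmin (Xmat k1) = LX" unfolding Xmat_def LX_def by (rule lmin_blk)
  have lmaxX: "lmax (Xmat k1) = LXM" unfolding Xmat_def LXM_def by (rule lmax_blk)
  have lminU: "lmin (Umat k1 k2 \<beta>min) = m" unfolding Umat_def m_def U11_def U12_def U22_def by (rule lmin_blk)
  have rho: "\<rho> = sqrt (LXM / LX)" using rho_def lminX lmaxX by simp
  have theta: "\<theta> = m / (2 * LXM)" using theta_def lminU lmaxX by simp
  have XL: "LX * (A + C) \<le> (1 + k1^2) * A + 2 * k1 * B + 1 * C" if "B^2 \<le> A * C" "0 \<le> A" "0 \<le> C" for A B C
    unfolding LX_def by (rule quad_lower[OF that])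
  have XU: "(1 + k1^2) * A + 2 * k1 * B + 1 * C \<le> LXM * (A + C)" if "B^2 \<le> A * C" "0 \<le> A" "0 \<le> C" for A B C
    unfolding LXM_def by (rule quad_upper[OF that])
  have UL: "m * (A + C) \<le> U11 * A + 2 * U12 * B + U22 * C" if "B^2 \<le> A * C" "0 \<le> A" "0 \<le> C" for A B C
    unfolding m_def by (rule quad_lower[OF that])
  have LXpos: "0 < LX" unfolding LX_def by (rule lm_pos) (auto simp: add_pos_nonneg)
  have "LX * (1 + k1^2) \<le> 1"
    using XL[of "-k1" 1 "k1^2"] by (simp add: power2_eq_square algebra_simps)
  moreover have "LX * 1 \<le> LX * (1 + k1^2)" using LXpos by (intro mult_left_mono) auto
  ultimately have LX1: "LX \<le> 1" by linarith
  have LXM1: "1 \<le> LXM" using XU[of 0 0 1] by simp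
  have bpos: "0 < \<beta>min" and det: "U12^2 < U11 * U22"
    using det_pos[OF k1 k2 bmin] unfolding U11_def U12_def U22_def by auto
  have U11pos: "0 < U11" unfolding U11_def using k1 k2 bpos by (simp add: add_pos_nonneg)
  have mpos: "0 < m" unfolding m_def by (rule lm_pos[OF U11pos det])
  have "m * (1 + k1^2) \<le> 2 * k1"
  proof -
    have "m * (1 + k1^2) \<le> U11 * 1 + 2 * U12 * (-k1) + U22 * k1^2"
      using UL[of "-k1" 1 "k1^2"] by (simp add: power2_eq_square)
    also have "\<dots> = 2 * k1" unfolding U11_def U12_def U22_def by (simp add: power2_eq_square algebra_simps)
    finally show ?thesis .
  qed
  moreover have "m * 1 \<le> m * (1 + k1^2)" using mpos by (intro mult_left_mono) auto
  ultimately have m1: "m \<le> 2 * k1" by linarith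
  have m2: "m \<le> 2 * k2"
  proof -
    have "m \<le> U22" using UL[of 0 0 1] by simp
    also have "\<dots> \<le> 2 * k2"
    proof -
      have "(k1 + k2) * \<beta>min \<le> (k1 + k2) * 1" using bmin(2) k1 k2 by (intro mult_left_mono) auto
      then show ?thesis unfolding U22_def by simp
    qed
    finally show ?thesis .
  qed
  define c where "c = m / LXM"
  have cpos: "0 < c" unfolding c_def using mpos LXM1 by simp
  have cm: "c \<le> m" unfolding c_def using mpos LXM1 by (simp add: divide_le_eq mult_le_cancel_left1)
  have c1: "c \<le> 2 * k1" and c2: "c \<le> 2 * k2" using cm m1 m2 by auto
  have theta_c: "\<theta> = c / 2" unfolding theta c_def by simp
  have theta0: "0 \<le> \<theta>" using theta_c cpos by simp
  have s0: "0 \<le> s" unfolding s_def by simp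
  have LXMLX: "0 \<le> LXM / LX" using LXpos LXM1 by (auto intro: divide_nonneg_pos)
  have rho0: "0 \<le> \<rho>" unfolding rho using LXMLX by simp
  have rho2: "\<rho>^2 = LXM / LX" unfolding rho using LXMLX by simp
  have rs: "\<rho> * s < r" using z0B unfolding s_def .

  have CS: "(x \<bullet> y)^2 \<le> (x \<bullet> x) * (y \<bullet> y)" for x y :: "real^3" by (rule Cauchy_Schwarz_ineq)
  have V0le: "(1 + k1^2) * (z1 0 \<bullet> z1 0) + 2 * k1 * (z1 0 \<bullet> z2 0) + (z2 0 \<bullet> z2 0) \<le> LXM * s^2"
  proof -
    have "s^2 = z1 0 \<bullet> z1 0 + z2 0 \<bullet> z2 0" unfolding s_def norm_stack_sq by (simp add: power2_norm_eq_inner)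
    then show ?thesis using XU[OF CS, of "z1 0" "z2 0"] by simp
  qed
  have first: "stack (z1 0) (z2 0) \<bullet> (Xmat k1 *v stack (z1 0) (z2 0)) < lmin (Xmat k1) * r^2"
  proof -
    have "stack (z1 0) (z2 0) \<bullet> (Xmat k1 *v stack (z1 0) (z2 0))
        = (1 + k1^2) * (z1 0 \<bullet> z1 0) + 2 * k1 * (z1 0 \<bullet> z2 0) + 1 * (z2 0 \<bullet> z2 0)"
      unfolding Xmat_def by (rule quad_blk)
    also have "\<dots> \<le> LXM * s^2" using V0le by simp
    also have "\<dots> = LX * (\<rho> * s)^2" using rho2 LXpos by (simp add: power_mult_distrib)
    also have "\<dots> < LX * r^2"
    proof -
      have "(\<rho> * s)^2 < r^2" using rs rho0 s0 by (intro power_strict_mono) auto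
      then show ?thesis using LXpos by simp
    qed
    finally show ?thesis unfolding lminX .
  qed

  have brng: "\<beta>min \<le> \<beta> t" "\<beta> t \<le> 1" if "t \<in> {0..ts}" for t using beta_rng that by auto
  define a1 where "a1 = 1 + k1 * k2"
  define b1 where "b1 = k1 + k2"
  define z2d where "z2d t = - (\<beta> t) *\<^sub>R (a1 *\<^sub>R z1 t + b1 *\<^sub>R z2 t)" for t
  have d1: "(z1 has_vector_derivative z2 t) (at t within {0..ts})" if "t \<in> {0..ts}" for t
    using ode1 that by auto
  have d2: "(z2 has_vector_derivative z2d t) (at t within {0..ts})" if "t \<in> {0..ts}" for t
  proof -
    have "fa P \<mu> w t (z1 t) + u t = z2d t" unfolding u_def z2d_def a1_def b1_def by simp
    then show ?thesis using ode2 that by metis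
  qed
  define V where "V t = (1 + k1^2) * (z1 t \<bullet> z1 t) + 2 * k1 * (z1 t \<bullet> z2 t) + (z2 t \<bullet> z2 t)" for t
  define Vd where "Vd t = (1 + k1^2) * (z1 t \<bullet> z2 t + z2 t \<bullet> z1 t) + 2 * k1 * (z1 t \<bullet> z2d t + z2 t \<bullet> z2 t)
      + (z2 t \<bullet> z2d t + z2d t \<bullet> z2 t)" for t
  have Vder: "(V has_real_derivative Vd t) (at t within {0..ts})" if "t \<in> {0..ts}" for t
  proof -
    have e1: "((\<lambda>t. z1 t \<bullet> z1 t) has_real_derivative (z1 t \<bullet> z2 t + z2 t \<bullet> z1 t)) (at t within {0..ts})"
      by (rule vd_inner[OF d1[OF that] d1[OF that]])
    have e2: "((\<lambda>t. z1 t \<bullet> z2 t) has_real_derivative (z1 t \<bullet> z2d t + z2 t \<bullet> z2 t)) (at t within {0..ts})"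
      by (rule vd_inner[OF d1[OF that] d2[OF that]])
    have e3: "((\<lambda>t. z2 t \<bullet> z2 t) has_real_derivative (z2 t \<bullet> z2d t + z2d t \<bullet> z2 t)) (at t within {0..ts})"
      by (rule vd_inner[OF d2[OF that] d2[OF that]])
    have "((\<lambda>t. (1 + k1^2) * (z1 t \<bullet> z1 t) + 2 * k1 * (z1 t \<bullet> z2 t) + (z2 t \<bullet> z2 t)) has_real_derivative Vd t) (at t within {0..ts})"
      unfolding Vd_def by (intro DERIV_add DERIV_cmult e1 e2 e3)
    then show ?thesis unfolding V_def[abs_def] .
  qed
  have key: "Vd t + c * V t \<le> 0" if t: "t \<in> {0..ts}" for t
  proof -
    define A where "A = z1 t \<bullet> z1 t"
    define B where "B = z1 t \<bullet> z2 t"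
    define C where "C = z2 t \<bullet> z2 t"
    define Y where "Y = (k1 *\<^sub>R z1 t + z2 t) \<bullet> (k1 *\<^sub>R z1 t + z2 t)"
    have A0: "0 \<le> A" "0 \<le> C" "0 \<le> Y" unfolding A_def C_def Y_def by simp_all
    have AC: "B^2 \<le> A * C" unfolding A_def B_def C_def by (rule CS)
    have Yeq: "Y = k1^2 * A + 2 * k1 * B + C" unfolding Y_def A_def B_def C_def
      by (simp add: inner_add_left inner_add_right inner_commute[of "z2 t" "z1 t"] power2_eq_square algebra_simps)
    have Veq: "V t = (1 + k1^2) * A + 2 * k1 * B + C" unfolding V_def A_def B_def C_def ..
    have Vdeq: "Vd t = - (2 * (k1 + k1^2 * k2) * \<beta> t * A + 2 * ((k1^2 + 2*k1*k2 + 1) * \<beta> t - k1^2 - 1) * B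
       + 2 * ((k1 + k2) * \<beta> t - k1) * C)"
      unfolding Vd_def z2d_def A_def B_def C_def a1_def b1_def
      by (simp add: inner_add_left inner_add_right inner_commute[of "z2 t" "z1 t"] power2_eq_square algebra_simps)
    have low: "c * ((1 + k1^2) * A + 2 * k1 * B + C) \<le>
       2 * (k1 + k1^2 * k2) * \<beta>min * A + 2 * ((k1^2 + 2*k1*k2 + 1) * \<beta>min - k1^2 - 1) * B
       + 2 * ((k1 + k2) * \<beta>min - k1) * C"
    proof -
      have "c * ((1 + k1^2) * A + 2 * k1 * B + C) \<le> c * (LXM * (A + C))"
        using XU[OF AC A0(1) A0(2)] cpos by (intro mult_left_mono) auto
      also have "\<dots> = m * (A + C)" unfolding c_def using LXM1 by simp
      also have "\<dots> \<le> U11 * A + 2 * U12 * B + U22 * C" by (rule UL[OF AC A0(1) A0(2)])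
      finally show ?thesis unfolding U11_def U12_def U22_def by (simp add: mult.assoc)
    qed
    have "c * ((1 + k1^2) * A + 2 * k1 * B + C) \<le>
       2 * (k1 + k1^2 * k2) * \<beta> t * A + 2 * ((k1^2 + 2*k1*k2 + 1) * \<beta> t - k1^2 - 1) * B
       + 2 * ((k1 + k2) * \<beta> t - k1) * C"
      by (rule key_ineq[OF brng(1)[OF t] brng(2)[OF t] A0(1) A0(3) c1 c2 Yeq low])
    then show ?thesis unfolding Vdeq Veq by simp
  qed
  have Vcont: "continuous_on {0..ts} V"
    by (rule has_derivative_continuous_on) (use Vder in \<open>auto simp: has_field_derivative_def\<close>)
  have decay: "V t * exp (c * t) \<le> V 0" if "t \<in> {0..ts}" for t
  proof -
    have "(\<lambda>x. V x * exp (c * x)) t \<le> (\<lambda>x. V x * exp (c * x)) 0"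
    proof (rule DERIV_nonpos_imp_decreasing_open[of 0 t])
      show "0 \<le> t" using that by simp
    next
      fix x assume x: "0 < x" "x < t"
      then have xin: "x \<in> {0..ts}" and atx: "at x within {0..ts} = at x" using that by (auto intro!: at_within_Icc_at)
      have "(V has_real_derivative Vd x) (at x)" using Vder[OF xin] atx by simp
      moreover have "((\<lambda>x. exp (c * x)) has_real_derivative exp (c * x) * c) (at x)"
        by (auto intro!: derivative_eq_intros)
      ultimately have "((\<lambda>x. V x * exp (c * x)) has_real_derivative (Vd x * exp (c * x) + exp (c * x) * c * V x)) (at x)"
        by (rule DERIV_mult)
      moreover have "Vd x * exp (c * x) + exp (c * x) * c * V x \<le> 0"
      proof -
        have "Vd x * exp (c * x) + exp (c * x) * c * V x = (Vd x + c * V x) * exp (c * x)" by (simp add: algebra_simps)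
        also have "\<dots> \<le> 0" using key[OF xin] by (simp add: mult_nonpos_nonneg)
        finally show ?thesis .
      qed
      ultimately show "\<exists>y. ((\<lambda>x. V x * exp (c * x)) has_real_derivative y) (at x) \<and> y \<le> 0" by blast
    next
      show "continuous_on {0..t} (\<lambda>x. V x * exp (c * x))"
        using that by (intro continuous_intros continuous_on_subset[OF Vcont]) auto
    qed
    then show ?thesis by simp
  qed

  have exp2: "exp (- \<theta> * t)^2 = exp (- (c * t))" for t
  proof -
    have "- \<theta> * t + - \<theta> * t = - (c * t)" unfolding theta_c by (simp add: field_simps)
    then show ?thesis by (simp add: power2_eq_square exp_add[symmetric])
  qed
  have z1b: "norm (z1 t) \<le> \<rho> * s * exp (- \<theta> * t)" if t: "t \<in> {0..ts}" for t
  proof -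
    have Yt: "V t = z1 t \<bullet> z1 t + (k1 *\<^sub>R z1 t + z2 t) \<bullet> (k1 *\<^sub>R z1 t + z2 t)" unfolding V_def
      by (simp add: inner_add_left inner_add_right inner_commute[of "z2 t" "z1 t"] power2_eq_square algebra_simps)
    have "norm (z1 t)^2 \<le> V t" unfolding Yt by (simp add: power2_norm_eq_inner)
    also have "V t = (V t * exp (c * t)) * exp (- (c * t))" by (simp add: mult.assoc exp_add[symmetric])
    also have "\<dots> \<le> V 0 * exp (- (c * t))" using decay[OF t] by (intro mult_right_mono) auto
    also have "\<dots> \<le> (LXM * s^2) * exp (- (c * t))" using V0le unfolding V_def by (intro mult_right_mono) auto
    also have "\<dots> \<le> ((LXM / LX) * s^2) * exp (- (c * t))"
    proof -
      have "LXM * LX \<le> LXM" using LX1 LXM1 by (simp add: mult_left_le)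
      then have "LXM \<le> LXM / LX" using LXpos by (simp add: le_divide_eq)
      then show ?thesis by (intro mult_right_mono) auto
    qed
    also have "\<dots> = (\<rho> * s * exp (- \<theta> * t))^2" unfolding power_mult_distrib exp2 rho2 by simp
    finally have "norm (z1 t)^2 \<le> (\<rho> * s * exp (- \<theta> * t))^2" .
    then show ?thesis by (rule power2_le_imp_le) (simp add: rho0 s0)
  qed
  have rle: "r \<le> norm (w j t)" if "j \<in> {1..P}" "t \<in> {0..ts}" for j t
    unfolding r_def
  proof (rule cInf_lower)
    show "norm (w j t) \<in> (\<lambda>(j, t). norm (w j t)) ` ({1..P} \<times> {0..ts})"
      using that by (intro image_eqI[of _ _ "(j, t)"]) auto
    show "bdd_below ((\<lambda>(j, t). norm (w j t)) ` ({1..P} \<times> {0..ts}))"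
      by (rule bdd_belowI[of _ 0]) auto
  qed
  have dnn: "0 \<le> \<rho> * s * exp (- \<theta> * t)" for t using rho0 s0 by simp
  have dlt: "\<rho> * s * exp (- \<theta> * t) < norm (w j t)" if "j \<in> {1..P}" "t \<in> {0..ts}" for j t
  proof -
    have "exp (- \<theta> * t) \<le> 1" using theta0 that by (simp add: mult_nonneg_nonneg)
    then have "\<rho> * s * exp (- \<theta> * t) \<le> \<rho> * s * 1" using rho0 s0 by (intro mult_left_mono) auto
    then show ?thesis using rs rle[OF that] by simp
  qed
  have contrr: "continuous_on {0..ts} f" if "\<forall>t\<ge>0. (f has_vector_derivative f' t) (at t within {0..})"
    for f :: "real \<Rightarrow> real^3" and f'
  proof -
    have "continuous (at x within {0..}) f" if "x \<in> {0..}" for x :: real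
    proof -
      have "0 \<le> x" using that by simp
      then have "(f has_vector_derivative f' x) (at x within {0..})" using \<open>\<forall>t\<ge>0. (f has_vector_derivative f' t) (at t within {0..})\<close> by blast
      then show ?thesis by (rule has_vector_derivative_continuous)
    qed
    then have "continuous_on {0..} f"
      by (simp add: continuous_on_eq_continuous_within)
    then show ?thesis by (rule continuous_on_subset) auto
  qed
  have contw: "continuous_on {0..ts} (w j)" if "j \<in> {1..P}" for j
  proof -
    from bspec[OF rr_C1 that] obtain r1 where "\<forall>t\<ge>0. (rr j has_vector_derivative r1 t) (at t within {0..})"
      by (elim exE conjE)
    then have c1: "continuous_on {0..ts} (rr j)" by (rule contrr)
    from rstar_C1 obtain r2 where "\<forall>t\<ge>0. (rstar has_vector_derivative r2 t) (at t within {0..})"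
      by (elim exE conjE)
    then have c2: "continuous_on {0..ts} rstar" by (rule contrr)
    show ?thesis unfolding w_def using c1 c2 by (intro continuous_intros)
  qed
  have contpsi: "continuous_on {0..ts} (\<lambda>t. psi w \<rho> \<theta> j s t)" if j: "j \<in> {1..P}" for j
  proof -
    have cw: "continuous_on {0..ts} (w j)" by (rule contw[OF j])
    have nz1: "\<forall>t\<in>{0..ts}. (norm (w j t) - \<rho> * s * exp (- \<theta> * t))^3 \<noteq> 0"
    proof
      fix t assume t: "t \<in> {0..ts}"
      have "\<rho> * s * exp (- \<theta> * t) < norm (w j t)" by (rule dlt[OF j t])
      then show "(norm (w j t) - \<rho> * s * exp (- \<theta> * t))^3 \<noteq> 0" by simp
    qed
    have nz2: "\<forall>t\<in>{0..ts}. norm (w j t)^3 \<noteq> 0"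
    proof
      fix t assume t: "t \<in> {0..ts}"
      have "0 < norm (w j t)" using dlt[OF j t] dnn[of t] by linarith
      then show "norm (w j t)^3 \<noteq> 0" by simp
    qed
    have cn1: "continuous_on {0..ts} (\<lambda>t. norm1 (w j t))" unfolding norm1_def
      by (intro continuous_on_sum continuous_on_rabs continuous_on_component cw)
    have cn: "continuous_on {0..ts} (\<lambda>t. norm (w j t))" by (intro continuous_on_norm cw)
    have ce: "continuous_on {0..ts} (\<lambda>t. \<rho> * s * exp (- \<theta> * t))" by (intro continuous_intros)
    have cd: "continuous_on {0..ts} (\<lambda>t. (norm (w j t) - \<rho> * s * exp (- \<theta> * t))^3)"
      by (intro continuous_on_power continuous_on_diff cn ce)
    have cd2: "continuous_on {0..ts} (\<lambda>t. norm (w j t)^3)" by (intro continuous_on_power cn)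
    have cs: "continuous_on {0..ts} (\<lambda>t. sqrt 3 * \<rho> * s * exp (- \<theta> * t))" by (intro continuous_intros)
    show ?thesis unfolding psi_def
      by (intro continuous_on_add continuous_on_diff continuous_on_divide cn1 cd cd2 cs nz1 nz2)
  qed
  have contg: "continuous_on {0..ts} (\<lambda>t. \<Sum>j=1..P. \<mu> j * psi w \<rho> \<theta> j s t)"
    by (intro continuous_on_sum continuous_on_mult continuous_on_const contpsi) simp
  have bdd: "bdd_above ((\<lambda>t. \<Sum>j=1..P. \<mu> j * psi w \<rho> \<theta> j s t) ` {0..ts})"
    by (rule bounded_imp_bdd_above, rule compact_imp_bounded, rule compact_continuous_image[OF contg compact_Icc])
  have rest: "\<forall>t\<in>{0..ts}. (\<forall>j\<in>{1..P}. z1 t \<noteq> w j t)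
        \<and> norm (fa P \<mu> w t (z1 t)) \<le> (\<Sum>j=1..P. \<mu> j * psi w \<rho> \<theta> j s t)
        \<and> (\<Sum>j=1..P. \<mu> j * psi w \<rho> \<theta> j s t) \<le> phi P \<mu> w \<rho> \<theta> ts s"
  proof (intro ballI conjI)
    fix t assume t: "t \<in> {0..ts}"
    show "z1 t \<noteq> w j t" if "j \<in> {1..P}" for j
      using z1b[OF t] dlt[OF that t] by auto
    have "norm (fa P \<mu> w t (z1 t)) \<le> (\<Sum>j=1..P. norm (\<mu> j *\<^sub>R
       ((1 / norm (w j t - z1 t) ^ 3) *\<^sub>R (w j t - z1 t) - (1 / norm (w j t) ^ 3) *\<^sub>R w j t)))"
      unfolding fa_def by (rule norm_sum)
    also have "\<dots> \<le> (\<Sum>j=1..P. \<mu> j * psi w \<rho> \<theta> j s t)"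
    proof (rule sum_mono)
      fix j assume j: "j \<in> {1..P}"
      have "norm ((1 / norm (w j t - z1 t) ^ 3) *\<^sub>R (w j t - z1 t) - (1 / norm (w j t) ^ 3) *\<^sub>R w j t)
          \<le> psi w \<rho> \<theta> j s t"
        using fa_term_bound[OF z1b[OF t] dlt[OF j t]] unfolding psi_def by (simp add: mult.assoc)
      then show "norm (\<mu> j *\<^sub>R ((1 / norm (w j t - z1 t) ^ 3) *\<^sub>R (w j t - z1 t) - (1 / norm (w j t) ^ 3) *\<^sub>R w j t))
          \<le> \<mu> j * psi w \<rho> \<theta> j s t"
        using mu j by (simp add: mult_left_mono less_imp_le)
    qed
    finally show "norm (fa P \<mu> w t (z1 t)) \<le> (\<Sum>j=1..P. \<mu> j * psi w \<rho> \<theta> j s t)" .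
    show "(\<Sum>j=1..P. \<mu> j * psi w \<rho> \<theta> j s t) \<le> phi P \<mu> w \<rho> \<theta> ts s"
      unfolding phi_def by (rule cSUP_upper[OF t bdd])
  qed
  show ?thesis unfolding s_def[symmetric] using first rest by blast
qed

end
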